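(* Let $n\geq 2$. The composite \[ \mathcal{M}_{0,n+1}/\Sigma_n\xrightarrow{\ \phi\ } C_n(\mathbb{C})/(\mathbb{C}\rtimes\mathbb{C}^* )\subseteq \frac{SP^n(\mathbb{C})-\Delta}{\mathbb{C}\rtimes\mathbb{C}^*}\xrightarrow{\ \psi\ }\mathbb{P}(n,n-1,\dots,2) \] is a topological embedding.
   Context: $\mathcal{M}_{0,n+1}$ is the moduli space of $n+1$ distinct labelled points on the Riemann sphere modulo biholomorphisms, identified (by sending the $0$-th point to $\infty$) with $F_n(\mathbb{C})/(\mathbb{C}\rtimes\mathbb{C}^* )$, where $F_n(\mathbb{C})$ is the ordered configuration space of $n$ points in $\mathbb{C}$ and $\mathbb{C}\rtimes\mathbb{C}^*$ acts by $z\mapsto\lambda z+\mu$; $\Sigma_n$ permutes the $n$ points. $C_n(\mathbb{C})$ is the unordered configuration space, $SP^n(\mathbb{C})$ the symmetric power, $\Delta$ its diagonal $\{\{z,\dots,z\}\}$. The map $\phi$ sends the class of $(z_1,\dots,z_n)$ to the class of $\{z_1,\dots,z_n\}$. The map $\psi$ sends the class of $\{z_1,\dots,z_n\}$ to $[a_0:\dots:a_{n-2}]$, where $a_k$ is the coefficient of $z^k$ in $\prod_i(z-z_i+B)$ with $B=(z_1+\dots+z_n)/n$. $\mathbb{P}(n,n-1,\dots,2)=(\mathbb{C}^{n-1}-\{0\})/\sim$ with $(a_0,\dots,a_{n-2})\sim(t^{n}a_0,t^{n-1}a_1,\dots,t^{2}a_{n-2})$, $t\in\mathbb{C}^*$.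 *)

theory Defs
  imports "HOL-Analysis.Analysis" "HOL-Computational_Algebra.Polynomial"
begin

text \<open>Quotient topology of a topological space X by a relation R
  (intended to be an equivalence relation on topspace X): the points are the
  classes, and a set of classes is open iff the union of its members
  (= its preimage under the class map) is open in X.\<close>
definition quotient_topology :: "'a topology \<Rightarrow> ('a \<times> 'a) set \<Rightarrow> 'a set topology" where
  "quotient_topology X R =
     topology (\<lambda>U. U \<subseteq> topspace X // R \<and> openin X (\<Union>U))"

text \<open>Ordered configuration space F_n(C): n distinct points z 0, ..., z (n-1),
  encoded as functions nat => complex vanishing from index n on.\<close>
definition conf :: "nat \<Rightarrow> (nat \<Rightarrow> complex) set" where
  "conf n = {z. (\<forall>k\<ge>n. z k = 0) \<and> inj_on z {..<n}}"

text \<open>Identification by the symmetric group and by C \<rtimes> C^*: z ~ w iff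
  w = lam * (z \<circ> sigma) + mu.\<close>
definition M_rel :: "nat \<Rightarrow> ((nat \<Rightarrow> complex) \<times> (nat \<Rightarrow> complex)) set" where
  "M_rel n = {(z, w). z \<in> conf n \<and> w \<in> conf n \<and>
     (\<exists>\<sigma> lam mu. \<sigma> permutes {..<n} \<and> lam \<noteq> 0 \<and>
        (\<forall>i<n. w i = lam * z (\<sigma> i) + mu))}"

text \<open>The space M_{0,n+1}/Sigma_n (= C_n(C)/(C \<rtimes> C^*)), quotient of the subspace F_n(C).\<close>
definition M_top :: "nat \<Rightarrow> (nat \<Rightarrow> complex) set topology" where
  "M_top n = quotient_topology (subtopology euclidean (conf n)) (M_rel n)"

text \<open>Weighted projective space P(n, n-1, ..., 2): nonzero vectors
  (a 0, ..., a (n-2)) (encoded as functions vanishing from index n-1 on),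
  with a ~ b iff b k = t^(n-k) a k for some t \<noteq> 0.\<close>
definition wp_carrier :: "nat \<Rightarrow> (nat \<Rightarrow> complex) set" where
  "wp_carrier n = {a. (\<forall>k\<ge>n-1. a k = 0) \<and> a \<noteq> (\<lambda>_. 0)}"

definition wp_rel :: "nat \<Rightarrow> ((nat \<Rightarrow> complex) \<times> (nat \<Rightarrow> complex)) set" where
  "wp_rel n = {(a, b). a \<in> wp_carrier n \<and> b \<in> wp_carrier n \<and>
     (\<exists>t. t \<noteq> 0 \<and> (\<forall>k<n-1. b k = t ^ (n - k) * a k))}"

definition wp_top :: "nat \<Rightarrow> (nat \<Rightarrow> complex) set topology" where
  "wp_top n = quotient_topology (subtopology euclidean (wp_carrier n)) (wp_rel n)"

definition psi_vec :: "nat \<Rightarrow> (nat \<Rightarrow> complex) \<Rightarrow> (nat \<Rightarrow> complex)" where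
  "psi_vec n z = (\<lambda>k. if k < n - 1 then
      coeff (\<Prod>i<n. [: (\<Sum>j<n. z j) / of_nat n - z i, 1 :]) k else 0)"

definition psi_phi :: "nat \<Rightarrow> (nat \<Rightarrow> complex) set \<Rightarrow> (nat \<Rightarrow> complex) set" where
  "psi_phi n C = wp_rel n `` {psi_vec n (SOME z. z \<in> C)}"

end

theory Submission
  imports Defs
begin


lemma qt_istop:
  assumes "equiv A R" "topspace X = A"
  shows "istopology (\<lambda>U. U \<subseteq> topspace X // R \<and> openin X (\<Union>U))"
  unfolding istopology_def
proof (intro conjI[of "\<forall>S T. _ S T" "\<forall>K. _ K"] allI impI)
  fix S T assume S: "S \<subseteq> topspace X // R \<and> openin X (\<Union>S)" and T: "T \<subseteq> topspace X // R \<and> openin X (\<Union>T)"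
  have "\<Union>(S \<inter> T) = \<Union>S \<inter> \<Union>T"
  proof
    show "\<Union>S \<inter> \<Union>T \<subseteq> \<Union>(S \<inter> T)"
    proof
      fix x assume "x \<in> \<Union>S \<inter> \<Union>T"
      then obtain C D where "C \<in> S" "D \<in> T" "x \<in> C" "x \<in> D" by auto
      moreover have "C = D \<or> C \<inter> D = {}" using quotient_disj[OF assms(1)] S T \<open>C \<in> S\<close> \<open>D \<in> T\<close> assms(2) by blast
      ultimately show "x \<in> \<Union>(S \<inter> T)" by blast
    qed
  qed auto
  moreover have "openin X (\<Union>S \<inter> \<Union>T)" using S T by (intro openin_Int) auto
  ultimately show "S \<inter> T \<subseteq> topspace X // R \<and> openin X (\<Union>(S \<inter> T))" using S T by auto
next
  fix K assume K: "\<forall>U\<in>K. U \<subseteq> topspace X // R \<and> openin X (\<Union>U)"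
  have "\<Union>(\<Union>K) = \<Union>((\<lambda>U. \<Union>U) ` K)" by auto
  then show "\<Union>K \<subseteq> topspace X // R \<and> openin X (\<Union>(\<Union>K))" using K by auto
qed

lemma qt_openin:
  assumes "equiv (topspace X) R"
  shows "openin (quotient_topology X R) U \<longleftrightarrow> U \<subseteq> topspace X // R \<and> openin X (\<Union>U)"
  unfolding quotient_topology_def using qt_istop[OF assms refl] by simp

lemma qt_topspace:
  assumes "equiv (topspace X) R"
  shows "topspace (quotient_topology X R) = topspace X // R"
proof -
  have "\<Union>(topspace X // R) = topspace X" using Union_quotient[OF assms] .
  then have "openin (quotient_topology X R) (topspace X // R)" using qt_openin[OF assms] by auto
  then have "topspace X // R \<subseteq> topspace (quotient_topology X R)" by (simp add: openin_subset)
  moreover have "topspace (quotient_topology X R) \<subseteq> topspace X // R"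
    using qt_openin[OF assms] openin_topspace by blast
  ultimately show ?thesis by blast
qed



lemma coeff_lin_mult: fixes p :: "'a::comm_ring_1 poly" shows "coeff ([:c, 1:] * p) k = c * coeff p k + (if k = 0 then 0 else coeff p (k - 1))"
  by (cases k) (auto simp: coeff_pCons)

lemma degree_linprod: "finite A \<Longrightarrow> degree (\<Prod>i\<in>A. [:c i, 1:]) \<le> card A"
proof -
  assume "finite A"
  then have "degree (\<Prod>i\<in>A. [:c i, 1:]) \<le> sum (degree \<circ> (\<lambda>i. [:c i, 1:])) A" by (rule degree_prod_sum_le)
  also have "\<dots> = card A" by simp
  finally show ?thesis .
qed

lemma coeff_linprod_big: "finite A \<Longrightarrow> card A < k \<Longrightarrow> coeff (\<Prod>i\<in>A. [:c i, 1:]) k = 0"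
  using degree_linprod[of A c] by (intro coeff_eq_0) auto

lemma coeff_scale:
  fixes c :: "'a \<Rightarrow> 'b::comm_ring_1"
  assumes "finite A"
  shows "coeff (\<Prod>i\<in>A. [:l * c i, 1:]) k = l ^ (card A - k) * coeff (\<Prod>i\<in>A. [:c i, 1:]) k"
  using assms
proof (induction A arbitrary: k rule: finite_induct)
  case empty
  then show ?case by (cases k) auto
next
  case (insert a A)
  let ?P = "\<Prod>i\<in>A. [:c i, 1:]"
  let ?Q = "\<Prod>i\<in>A. [:l * c i, 1:]"
  have ca: "card (insert a A) = Suc (card A)" using insert by simp
  have eq1: "coeff (\<Prod>i\<in>insert a A. [:l * c i, 1:]) k = l * c a * coeff ?Q k + (if k = 0 then 0 else coeff ?Q (k - 1))"
    using insert by (simp del: mult_pCons_left add: coeff_lin_mult)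
  have eq2: "coeff (\<Prod>i\<in>insert a A. [:c i, 1:]) k = c a * coeff ?P k + (if k = 0 then 0 else coeff ?P (k - 1))"
    using insert by (simp del: mult_pCons_left add: coeff_lin_mult)
  show ?case
  proof (cases "k \<le> card A")
    case True
    then have "l ^ (Suc (card A) - k) = l * l ^ (card A - k)" by (simp add: Suc_diff_le)
    moreover have "k \<noteq> 0 \<Longrightarrow> card A - (k - 1) = Suc (card A) - k" using True by simp
    ultimately show ?thesis unfolding eq1 eq2 ca insert.IH by (auto simp: algebra_simps)
  next
    case False
    then have z: "coeff ?P k = 0" "coeff ?Q k = 0" using coeff_linprod_big[of A k] insert by auto
    have "Suc (card A) - k = card A - (k - 1)" using False by simp
    moreover have "card A - (k - 1) = 0" using False by simp
    ultimately show ?thesis unfolding eq1 eq2 ca insert.IH using z False by auto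
  qed
qed

lemma coeff_x_pow: "coeff (([:0, 1:] :: 'a::comm_ring_1 poly) ^ m) k = (if k = m then 1 else 0)"
  by (induction m arbitrary: k) (auto simp del: mult_pCons_left simp add: coeff_lin_mult)

lemma coeff_top:
  fixes c :: "'a \<Rightarrow> 'b::comm_ring_1"
  assumes "finite A" "card A \<le> k"
  shows "coeff (\<Prod>i\<in>A. [:c i, 1:]) k = (if k = card A then 1 else 0)"
proof -
  have "coeff (\<Prod>i\<in>A. [:0 * c i, 1:]) k = coeff (\<Prod>i\<in>A. [:c i, 1:]) k"
    using coeff_scale[OF assms(1), of 0 c k] assms by simp
  moreover have "(\<Prod>i\<in>A. [:0 * c i, 1:]) = [:0, 1:] ^ card A" by simp
  ultimately show ?thesis by (simp add: coeff_x_pow)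
qed

lemma coeff_sub:
  fixes c :: "'a \<Rightarrow> 'b::comm_ring_1"
  assumes "finite A" "A \<noteq> {}"
  shows "coeff (\<Prod>i\<in>A. [:c i, 1:]) (card A - 1) = (\<Sum>i\<in>A. c i)"
  using assms
proof (induction A rule: finite_ne_induct)
  case (singleton x)
  then show ?case by simp
next
  case (insert a A)
  have "card A \<noteq> 0" using insert by auto
  then show ?case using insert coeff_top[of A "card A" c]
    by (simp del: mult_pCons_left add: coeff_lin_mult)
qed



definition cB :: "nat \<Rightarrow> (nat \<Rightarrow> complex) \<Rightarrow> complex" where
  "cB n z = (\<Sum>j<n. z j) / of_nat n"

definition PP :: "nat \<Rightarrow> (nat \<Rightarrow> complex) \<Rightarrow> complex poly" where
  "PP n z = (\<Prod>i<n. [: cB n z - z i, 1 :])"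

lemma psi_vec_PP: "psi_vec n z = (\<lambda>k. if k < n - 1 then coeff (PP n z) k else 0)"
  unfolding psi_vec_def PP_def cB_def by simp

definition wact :: "nat \<Rightarrow> complex \<Rightarrow> (nat \<Rightarrow> complex) \<Rightarrow> (nat \<Rightarrow> complex)" where
  "wact n t a = (\<lambda>k. if k < n - 1 then t ^ (n - k) * a k else 0)"

lemma cB_cong: "(\<And>i. i < n \<Longrightarrow> w i = z i) \<Longrightarrow> cB n w = cB n z"
  unfolding cB_def by (metis (no_types, lifting) lessThan_iff sum.cong)

lemma PP_cong: "(\<And>i. i < n \<Longrightarrow> w i = z i) \<Longrightarrow> PP n w = PP n z"
  unfolding PP_def using cB_cong[of n w z] by (intro prod.cong) auto

lemma cB_affine_perm:
  assumes "n > 0" "\<sigma> permutes {..<n}" "\<And>i. i < n \<Longrightarrow> w i = l * z (\<sigma> i) + m"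
  shows "cB n w = l * cB n z + m"
proof -
  have "(\<Sum>j<n. w j) = (\<Sum>j<n. l * z (\<sigma> j) + m)" using assms(3) by simp
  also have "\<dots> = l * (\<Sum>j<n. z (\<sigma> j)) + of_nat n * m" by (simp add: sum.distrib sum_distrib_left)
  also have "(\<Sum>j<n. z (\<sigma> j)) = (\<Sum>j<n. z j)"
    using sum.permute[OF assms(2), of z] by (simp add: comp_def)
  finally show ?thesis using assms(1) unfolding cB_def by (simp add: field_simps)
qed

lemma PP_affine_perm:
  assumes "n > 0" "\<sigma> permutes {..<n}" "\<And>i. i < n \<Longrightarrow> w i = l * z (\<sigma> i) + m"
  shows "PP n w = (\<Prod>i<n. [: l * (cB n z - z i), 1 :])"
proof -
  have "PP n w = (\<Prod>i<n. [: l * (cB n z - z (\<sigma> i)), 1 :])"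
    unfolding PP_def using assms(3) cB_affine_perm[of n \<sigma> w l z m, OF assms]
    by (intro prod.cong) (auto simp: algebra_simps)
  also have "\<dots> = (\<Prod>i<n. [: l * (cB n z - z i), 1 :])"
    using prod.permute[OF assms(2), of "\<lambda>i. [: l * (cB n z - z i), 1 :]"] by (simp add: comp_def)
  finally show ?thesis .
qed

lemma psi_affine_perm:
  assumes "n > 0" "\<sigma> permutes {..<n}" "\<And>i. i < n \<Longrightarrow> w i = l * z (\<sigma> i) + m"
  shows "psi_vec n w = wact n l (psi_vec n z)"
  using PP_affine_perm[of n \<sigma> w l z m, OF assms]
  using coeff_scale[of "{..<n}" l "\<lambda>i. cB n z - z i"] by (simp add: PP_def psi_vec_PP wact_def fun_eq_iff)

lemma sum_c: "n > 0 \<Longrightarrow> (\<Sum>i<n. cB n z - z i) = 0"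
  by (simp add: sum_subtractf cB_def)

lemma PP_sub: "n > 0 \<Longrightarrow> coeff (PP n z) (n - 1) = 0"
  unfolding PP_def using coeff_sub[of "{..<n}" "\<lambda>i. cB n z - z i"] sum_c[of n z] by auto

lemma PP_top: "n \<le> k \<Longrightarrow> coeff (PP n z) k = (if k = n then 1 else 0)"
  unfolding PP_def using coeff_top[of "{..<n}" k "\<lambda>i. cB n z - z i"] by simp

lemma root_lemma:
  assumes "n > 0" "t \<noteq> 0" "\<And>k. k < n - 1 \<Longrightarrow> psi_vec n w k = t ^ (n - k) * psi_vec n z k" "i < n"
  shows "\<exists>j<n. w i - cB n w = t * (z j - cB n z)"
proof -
  have eq: "PP n w = (\<Prod>j<n. [: t * (cB n z - z j), 1 :])"
  proof (rule poly_eqI)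
    fix k
    have sc: "coeff (\<Prod>j<n. [: t * (cB n z - z j), 1 :]) k = t ^ (n - k) * coeff (PP n z) k"
      using coeff_scale[of "{..<n}" t "\<lambda>i. cB n z - z i" k] by (simp add: PP_def)
    consider "k < n - 1" | "k = n - 1" | "n \<le> k" by linarith
    then show "coeff (PP n w) k = coeff (\<Prod>j<n. [: t * (cB n z - z j), 1 :]) k"
    proof cases
      case 1 then show ?thesis using assms(3)[OF 1] sc by (simp add: psi_vec_PP)
    next
      case 2 then show ?thesis using sc PP_sub[OF assms(1)] by simp
    next
      case 3 then show ?thesis using sc PP_top[OF 3] by simp
    qed
  qed
  have "poly (PP n w) (w i - cB n w) = 0"
    unfolding PP_def poly_prod using assms(4) by (auto intro!: bexI[of _ i])
  then have "(\<Prod>j<n. t * (cB n z - z j) + (w i - cB n w)) = 0"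
    unfolding eq poly_prod by simp
  then obtain j where "j < n" "t * (cB n z - z j) + (w i - cB n w) = 0" by auto
  then show ?thesis by (intro exI[of _ j]) (auto simp: algebra_simps)
qed



lemma equiv_M: "equiv (conf n) (M_rel n)"
proof (rule equivI)
  show "M_rel n \<subseteq> conf n \<times> conf n" unfolding M_rel_def by auto
  show "refl_on (conf n) (M_rel n)" unfolding refl_on_def
  proof
    fix x assume "x \<in> conf n"
    moreover have "id permutes {..<n}" by simp
    moreover have "\<forall>i<n. x i = 1 * x (id i) + 0" by simp
    ultimately show "(x, x) \<in> M_rel n" unfolding M_rel_def
      by (simp only: mem_Collect_eq case_prod_conv) (intro conjI exI[of _ id] exI[of _ 1] exI[of _ 0]; simp)
  qed
  show "sym (M_rel n)" unfolding sym_def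
  proof (intro allI impI)
    fix z w assume "(z, w) \<in> M_rel n"
    then obtain \<sigma> l m where zw: "z \<in> conf n" "w \<in> conf n" "\<sigma> permutes {..<n}" "l \<noteq> 0"
      "\<And>i. i < n \<Longrightarrow> w i = l * z (\<sigma> i) + m" unfolding M_rel_def by auto
    have "\<forall>i<n. z i = (1 / l) * w (inv \<sigma> i) + (- m / l)"
    proof (intro allI impI)
      fix i assume "i < n"
      then have "inv \<sigma> i < n" using permutes_in_image[OF permutes_inv[OF zw(3)]] by auto
      then have "w (inv \<sigma> i) = l * z i + m" using zw(5) permutes_inverses(1)[OF zw(3)] by metis
      then show "z i = (1 / l) * w (inv \<sigma> i) + (- m / l)" using zw(4) by (simp add: field_simps)
    qed
    then show "(w, z) \<in> M_rel n" unfolding M_rel_def using zw permutes_inv[OF zw(3)]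
      by (simp only: mem_Collect_eq case_prod_conv) (intro conjI exI[of _ "inv \<sigma>"] exI[of _ "1 / l"] exI[of _ "- m / l"]; simp)
  qed
  show "trans (M_rel n)" unfolding trans_def
  proof (intro allI impI)
    fix z w x assume "(z, w) \<in> M_rel n" "(w, x) \<in> M_rel n"
    then obtain \<sigma> l m \<tau> l' m' where zw: "z \<in> conf n" "w \<in> conf n" "\<sigma> permutes {..<n}" "l \<noteq> 0"
      "\<And>i. i < n \<Longrightarrow> w i = l * z (\<sigma> i) + m" and wx: "x \<in> conf n" "\<tau> permutes {..<n}" "l' \<noteq> 0"
      "\<And>i. i < n \<Longrightarrow> x i = l' * w (\<tau> i) + m'" unfolding M_rel_def by auto
    have "\<forall>i<n. x i = (l' * l) * z ((\<sigma> \<circ> \<tau>) i) + (l' * m + m')"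
    proof (intro allI impI)
      fix i assume "i < n"
      then have "\<tau> i < n" using permutes_in_image[OF wx(2)] by auto
      then show "x i = (l' * l) * z ((\<sigma> \<circ> \<tau>) i) + (l' * m + m')" using wx(4) zw(5) \<open>i < n\<close>
        by (simp add: algebra_simps)
    qed
    then show "(z, x) \<in> M_rel n" unfolding M_rel_def using zw wx permutes_compose[OF wx(2) zw(3)]
      by (simp only: mem_Collect_eq case_prod_conv) (intro conjI exI[of _ "\<sigma> \<circ> \<tau>"] exI[of _ "l' * l"] exI[of _ "l' * m + m'"]; simp)
  qed
qed

lemma equiv_W: "equiv (wp_carrier n) (wp_rel n)"
proof (rule equivI)
  show "wp_rel n \<subseteq> wp_carrier n \<times> wp_carrier n" unfolding wp_rel_def by auto
  show "refl_on (wp_carrier n) (wp_rel n)" unfolding refl_on_def wp_rel_def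
    by (auto intro!: exI[of _ 1])
  show "sym (wp_rel n)" unfolding sym_def
  proof (intro allI impI)
    fix a b assume "(a, b) \<in> wp_rel n"
    then obtain t where ab: "a \<in> wp_carrier n" "b \<in> wp_carrier n" "t \<noteq> 0" "\<And>k. k < n - 1 \<Longrightarrow> b k = t ^ (n - k) * a k"
      unfolding wp_rel_def by auto
    have "\<forall>k<n-1. a k = (1 / t) ^ (n - k) * b k" using ab by (simp add: power_divide)
    then show "(b, a) \<in> wp_rel n" unfolding wp_rel_def using ab by (auto intro!: exI[of _ "1 / t"])
  qed
  show "trans (wp_rel n)" unfolding trans_def
  proof (intro allI impI)
    fix a b c assume "(a, b) \<in> wp_rel n" "(b, c) \<in> wp_rel n"
    then obtain t s where ab: "a \<in> wp_carrier n" "b \<in> wp_carrier n" "t \<noteq> 0" "\<And>k. k < n - 1 \<Longrightarrow> b k = t ^ (n - k) * a k"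
      and bc: "c \<in> wp_carrier n" "s \<noteq> 0" "\<And>k. k < n - 1 \<Longrightarrow> c k = s ^ (n - k) * b k"
      unfolding wp_rel_def by auto
    have "\<forall>k<n-1. c k = (s * t) ^ (n - k) * a k" using ab bc by (simp add: power_mult_distrib)
    then show "(a, c) \<in> wp_rel n" unfolding wp_rel_def using ab bc by (auto intro!: exI[of _ "s * t"])
  qed
qed

lemma rel_from_roots:
  assumes "n > 0" "\<And>k. n \<le> k \<Longrightarrow> z k = 0" "w \<in> conf n" "t \<noteq> 0"
    "\<And>i. i < n \<Longrightarrow> \<exists>j<n. w i - cB n w = t * (z j - cB n z)"
  shows "(z, w) \<in> M_rel n" "z \<in> conf n"
proof -
  define \<sigma> where "\<sigma> i = (if i < n then (SOME j. j < n \<and> w i - cB n w = t * (z j - cB n z)) else i)" for i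
  have sig: "\<sigma> i < n \<and> w i - cB n w = t * (z (\<sigma> i) - cB n z)" if "i < n" for i
    unfolding \<sigma>_def using that someI_ex[OF assms(5)[OF that]] by auto
  have injw: "inj_on w {..<n}" using assms(3) unfolding conf_def by auto
  have inj: "inj_on \<sigma> {..<n}"
  proof (rule inj_onI)
    fix i j assume "i \<in> {..<n}" "j \<in> {..<n}" "\<sigma> i = \<sigma> j"
    then have "w i - cB n w = w j - cB n w" using sig[of i] sig[of j] by auto
    then have "w i = w j" by simp
    then show "i = j" using injw \<open>i \<in> {..<n}\<close> \<open>j \<in> {..<n}\<close> by (auto dest: inj_onD)
  qed
  have im: "\<sigma> ` {..<n} = {..<n}" using endo_inj_surj[OF _ _ inj] sig by auto
  have bij: "bij_betw \<sigma> {..<n} {..<n}" unfolding bij_betw_def using inj im by blast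
  have perm: "\<sigma> permutes {..<n}"
    by (rule bij_imp_permutes[OF bij]) (simp add: \<sigma>_def)
  have weq: "\<And>i. i < n \<Longrightarrow> w i = t * z (\<sigma> i) + (cB n w - t * cB n z)"
    using sig by (auto simp: algebra_simps)
  show zc: "z \<in> conf n" unfolding conf_def
  proof (intro CollectI conjI allI impI inj_onI)
    fix k assume "n \<le> k" then show "z k = 0" using assms(2) by auto
  next
    fix a b assume ab: "a \<in> {..<n}" "b \<in> {..<n}" "z a = z b"
    obtain i where i: "i < n" "\<sigma> i = a" using im ab(1) by (metis imageE lessThan_iff)
    obtain j where j: "j < n" "\<sigma> j = b" using im ab(2) by (metis imageE lessThan_iff)
    have "w i = w j" using weq[OF i(1)] weq[OF j(1)] i j ab(3) by simp
    then have "i = j" using injw i j by (auto dest: inj_onD)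
    then show "a = b" using i j by simp
  qed
  show "(z, w) \<in> M_rel n" unfolding M_rel_def using zc assms(3,4) perm weq by blast
qed

lemma psi_zero_const:
  assumes "n > 0" "\<And>k. k < n - 1 \<Longrightarrow> psi_vec n z k = 0" "i < n"
  shows "z i = cB n z"
proof -
  have "psi_vec n (\<lambda>_. 0) k = 0" if "k < n - 1" for k
  proof -
    have "PP n (\<lambda>_. 0) = [:0, 1:] ^ n" unfolding PP_def cB_def by simp
    then show ?thesis using that unfolding psi_vec_PP by (simp add: coeff_x_pow)
  qed
  then have "\<exists>j<n. z i - cB n z = 1 * ((\<lambda>_. 0) j - cB n (\<lambda>_. 0))"
    using root_lemma[of n 1 z "\<lambda>_. 0" i] assms by auto
  then show ?thesis by (simp add: cB_def)
qed

lemma psi_vanish: "n - 1 \<le> k \<Longrightarrow> psi_vec n z k = 0"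
  unfolding psi_vec_def by simp

lemma psi_in_wp:
  assumes "n > 0" "\<exists>i<n. z i \<noteq> cB n z"
  shows "psi_vec n z \<in> wp_carrier n"
proof -
  have "\<exists>k<n-1. psi_vec n z k \<noteq> 0" using psi_zero_const[of n z] assms by blast
  then have "psi_vec n z \<noteq> (\<lambda>_. 0)" by (metis)
  then show ?thesis unfolding wp_carrier_def using psi_vanish by auto
qed

lemma conf_nonconst:
  assumes "n \<ge> 2" "z \<in> conf n" shows "\<exists>i<n. z i \<noteq> cB n z"
proof -
  have "z 0 \<noteq> z 1" using assms unfolding conf_def by (auto dest: inj_onD)
  then show ?thesis using assms(1) by (metis One_nat_def less_2_cases_iff less_le_trans)
qed

lemma psi_in_wp_conf: "n \<ge> 2 \<Longrightarrow> z \<in> conf n \<Longrightarrow> psi_vec n z \<in> wp_carrier n"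
  using psi_in_wp conf_nonconst by auto

lemma M_imp_W:
  assumes "n \<ge> 2" "(z, w) \<in> M_rel n"
  shows "(psi_vec n z, psi_vec n w) \<in> wp_rel n"
proof -
  obtain \<sigma> l m where zw: "z \<in> conf n" "w \<in> conf n" "\<sigma> permutes {..<n}" "l \<noteq> 0"
      "\<And>i. i < n \<Longrightarrow> w i = l * z (\<sigma> i) + m" using assms(2) unfolding M_rel_def by auto
  have "psi_vec n w = wact n l (psi_vec n z)" using psi_affine_perm[of n \<sigma> w l z m] zw assms(1) by auto
  then have "\<forall>k<n-1. psi_vec n w k = l ^ (n - k) * psi_vec n z k" by (simp add: wact_def)
  then show ?thesis unfolding wp_rel_def using psi_in_wp_conf[OF assms(1) zw(1)] psi_in_wp_conf[OF assms(1) zw(2)] zw(4)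
    by (simp only: mem_Collect_eq case_prod_conv) (intro conjI exI[of _ l]; simp)
qed

lemma W_imp_M:
  assumes "n \<ge> 2" "\<And>k. n \<le> k \<Longrightarrow> z k = 0" "w \<in> conf n" "(psi_vec n z, psi_vec n w) \<in> wp_rel n"
  shows "(z, w) \<in> M_rel n"
proof -
  obtain t where t: "t \<noteq> 0" "\<And>k. k < n - 1 \<Longrightarrow> psi_vec n w k = t ^ (n - k) * psi_vec n z k"
    using assms(4) unfolding wp_rel_def by auto
  show ?thesis using rel_from_roots(1)[of n z w t] root_lemma[of n t w z] assms t by auto
qed



lemma cont_coeff_linprod:
  fixes c :: "'i \<Rightarrow> 'a::topological_space \<Rightarrow> complex"
  assumes "finite A" "\<And>i. i \<in> A \<Longrightarrow> continuous_on S (c i)"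
  shows "continuous_on S (\<lambda>z. coeff (\<Prod>i\<in>A. [:c i z, 1:]) k)"
  using assms
proof (induction A arbitrary: k rule: finite_induct)
  case empty
  then show ?case by (cases k) auto
next
  case (insert a A)
  have "continuous_on S (\<lambda>z. c a z * coeff (\<Prod>i\<in>A. [:c i z, 1:]) k +
      (if k = 0 then 0 else coeff (\<Prod>i\<in>A. [:c i z, 1:]) (k - 1)))"
    using insert by (cases k) (auto intro!: continuous_intros)
  then show ?case using insert by (simp del: mult_pCons_left add: coeff_lin_mult)
qed

lemma cont_coord: "continuous_on S (\<lambda>z::nat \<Rightarrow> 'b::topological_space. z i)"
  by (rule continuous_on_subset[OF continuous_on_product_coordinates]) auto

lemma cont_cB: "continuous_on S (cB n)"
proof (cases "n = 0")
  case True then show ?thesis by (simp add: cB_def)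
next
  case False then show ?thesis unfolding cB_def by (intro continuous_intros cont_coord) auto
qed

lemma cont_psi: "continuous_on S (psi_vec n)"
proof (rule continuous_on_coordinatewise_then_product)
  fix k
  have "continuous_on S (\<lambda>z. coeff (PP n z) k)"
    unfolding PP_def by (intro cont_coeff_linprod continuous_intros cont_cB cont_coord) auto
  then show "continuous_on S (\<lambda>z. psi_vec n z k)"
    unfolding psi_vec_PP by (cases "k < n - 1") auto
qed

definition nu :: "nat \<Rightarrow> (nat \<Rightarrow> complex) \<Rightarrow> real" where
  "nu n b = (\<Sum>k<n-1. root (n - k) (cmod (b k)))"

definition Nrm :: "nat \<Rightarrow> (nat \<Rightarrow> complex) \<Rightarrow> (nat \<Rightarrow> complex)" where
  "Nrm n b = wact n (complex_of_real (1 / nu n b)) b"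

lemma nu_wact: "nu n (wact n t b) = cmod t * nu n b"
proof -
  have "root (n - k) (cmod (t ^ (n - k) * b k)) = cmod t * root (n - k) (cmod (b k))" if "k < n - 1" for k
  proof -
    have "root (n - k) (cmod (t ^ (n - k) * b k)) = root (n - k) (cmod t ^ (n - k)) * root (n - k) (cmod (b k))"
      by (simp add: norm_mult norm_power real_root_mult)
    also have "root (n - k) (cmod t ^ (n - k)) = cmod t" using that by (intro real_root_power_cancel) auto
    finally show ?thesis .
  qed
  then show ?thesis unfolding nu_def wact_def by (simp add: sum_distrib_left)
qed

lemma nu_nonneg: "nu n b \<ge> 0"
  unfolding nu_def by (intro sum_nonneg real_root_ge_zero) auto

lemma nu_pos: assumes "b \<in> wp_carrier n" shows "nu n b > 0"
proof -
  obtain k where k: "b k \<noteq> 0" using assms unfolding wp_carrier_def by auto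
  then have kn: "k < n - 1" using assms unfolding wp_carrier_def by (metis (mono_tags, lifting) mem_Collect_eq not_le)
  have "0 < root (n - k) (cmod (b k))" using k kn by (intro real_root_gt_zero) auto
  also have "\<dots> \<le> nu n b" unfolding nu_def using kn
    by (intro member_le_sum real_root_ge_zero) auto
  finally show ?thesis .
qed

lemma wact_wact: "wact n s (wact n t a) = wact n (s * t) a"
  unfolding wact_def by (auto simp: power_mult_distrib fun_eq_iff)

lemma wact_1: "(\<And>k. n - 1 \<le> k \<Longrightarrow> a k = 0) \<Longrightarrow> wact n 1 a = a"
  unfolding wact_def by (auto simp: fun_eq_iff)

lemma wp_vanish: "b \<in> wp_carrier n \<Longrightarrow> n - 1 \<le> k \<Longrightarrow> b k = 0"
  unfolding wp_carrier_def by auto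

lemma Nrm_wact:
  assumes "b \<in> wp_carrier n" "t \<noteq> 0"
  shows "Nrm n (wact n t b) = wact n (t / cmod t) (Nrm n b)"
proof -
  have "complex_of_real (1 / (cmod t * nu n b)) * t = t / complex_of_real (cmod t) * complex_of_real (1 / nu n b)"
    by (simp add: field_simps)
  then show ?thesis unfolding Nrm_def nu_wact wact_wact by simp
qed

lemma Nrm_inv:
  assumes "b \<in> wp_carrier n"
  shows "wact n (complex_of_real (nu n b)) (Nrm n b) = b"
proof -
  have "complex_of_real (nu n b) * complex_of_real (1 / nu n b) = 1" using nu_pos[OF assms] by (simp add: field_simps)
  then show ?thesis unfolding Nrm_def wact_wact using wact_1[of n b] wp_vanish[OF assms] by simp
qed

lemma cont_nu: "continuous_on S (nu n)"
  unfolding nu_def by (intro continuous_intros cont_coord)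

lemma cont_Nrm: "continuous_on (wp_carrier n) (Nrm n)"
proof (rule continuous_on_coordinatewise_then_product)
  fix k
  have "continuous_on (wp_carrier n) (\<lambda>b. complex_of_real (1 / nu n b) ^ (n - k) * b k)"
    by (intro continuous_intros cont_nu cont_coord) (metis less_irrefl nu_pos)
  then show "continuous_on (wp_carrier n) (\<lambda>b. Nrm n b k)"
    unfolding Nrm_def wact_def by (cases "k < n - 1") auto
qed

lemma psi_scale: "n > 0 \<Longrightarrow> psi_vec n (\<lambda>i. u * z i) = wact n u (psi_vec n z)"
  using psi_affine_perm[of n id "\<lambda>i. u * z i" u z 0] by simp



definition Box :: "nat \<Rightarrow> (nat \<Rightarrow> complex) set" where
  "Box n = Pi UNIV (\<lambda>k. if k < n then cball 0 1 else {0})"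

lemma compact_Box: "compact (Box n)"
proof -
  have "compactin (product_topology (\<lambda>_. euclidean) UNIV) (PiE UNIV (\<lambda>k. if k < n then cball (0::complex) 1 else {0}))"
    unfolding compactin_PiE by auto
  then show ?thesis unfolding Box_def euclidean_product_topology PiE_UNIV_domain by simp
qed

definition Kset :: "nat \<Rightarrow> (nat \<Rightarrow> complex) set" where
  "Kset n = Box n \<inter> {z. (\<Sum>i<n. z i) = 0} \<inter> {z. (\<Sum>i<n. (cmod (z i))\<^sup>2) = 1}"

lemma compact_Kset: "compact (Kset n)"
proof -
  have "closed ({z::nat\<Rightarrow>complex. (\<Sum>i<n. z i) = 0} \<inter> {z. (\<Sum>i<n. (cmod (z i))\<^sup>2) = 1})"
    by (intro closed_Int closed_Collect_eq continuous_on_sum continuous_intros cont_coord)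
  then show ?thesis unfolding Kset_def using compact_Box by (simp add: Int_assoc compact_Int_closed)
qed

lemma Kset_vanish: "z \<in> Kset n \<Longrightarrow> n \<le> k \<Longrightarrow> z k = 0"
  unfolding Kset_def Box_def by (auto simp: Pi_iff) (metis not_le singletonD)

lemma Kset_psi: assumes "n > 0" "z \<in> Kset n" shows "psi_vec n z \<in> wp_carrier n"
proof (rule psi_in_wp[OF assms(1)], rule ccontr)
  assume "\<not> (\<exists>i<n. z i \<noteq> cB n z)"
  moreover have "cB n z = 0" using assms(2) unfolding Kset_def cB_def by auto
  ultimately have "\<forall>i<n. z i = 0" by auto
  then have "(\<Sum>i<n. (cmod (z i))\<^sup>2) = 0" by simp
  then show False using assms(2) unfolding Kset_def by auto
qed



lemma normalize_conf:
  assumes "n \<ge> 2" "z \<in> conf n"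
  shows "\<exists>z' r. z' \<in> Kset n \<and> z' \<in> conf n \<and> (z, z') \<in> M_rel n \<and> r > 0 \<and>
     psi_vec n z' = wact n (complex_of_real (1 / r)) (psi_vec n z)"
proof -
  define B where "B = cB n z"
  define s where "s = (\<Sum>i<n. (cmod (z i - B))\<^sup>2)"
  define r where "r = sqrt s"
  obtain i0 where i0: "i0 < n" "z i0 \<noteq> B" using conf_nonconst[OF assms] B_def by auto
  have "0 < (cmod (z i0 - B))\<^sup>2" using i0 by simp
  also have "\<dots> \<le> s" unfolding s_def using i0 by (intro member_le_sum) auto
  finally have spos: "s > 0" .
  have rpos: "r > 0" unfolding r_def using spos by simp
  have r2: "r\<^sup>2 = s" unfolding r_def using spos by simp
  define l where "l = complex_of_real (1 / r)"
  define z' where "z' = (\<lambda>i. if i < n then l * z i + (- B * l) else 0)"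
  have lnz: "l \<noteq> 0" unfolding l_def using rpos by simp
  have z'i: "z' i = l * (z i - B)" if "i < n" for i using that unfolding z'_def by (simp add: algebra_simps)
  have nz: "(cmod (z' i))\<^sup>2 = (cmod (z i - B))\<^sup>2 / s" if "i < n" for i
    using that rpos r2 unfolding z'i[OF that] l_def by (simp add: norm_mult power_mult_distrib power_divide norm_divide)
  have zc: "z' \<in> conf n" unfolding conf_def
  proof (intro CollectI conjI allI impI inj_onI)
    fix k assume "n \<le> k" then show "z' k = 0" unfolding z'_def by simp
  next
    fix a b assume ab: "a \<in> {..<n}" "b \<in> {..<n}" "z' a = z' b"
    then have "z a = z b" using z'i lnz by auto
    then show "a = b" using assms(2) ab unfolding conf_def by (auto dest: inj_onD)
  qed
  have perm: "id permutes {..<n}" by simp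
  have aff: "\<And>i. i < n \<Longrightarrow> z' i = l * z (id i) + (- B * l)" unfolding z'_def by simp
  have rel: "(z, z') \<in> M_rel n" unfolding M_rel_def using assms(2) zc lnz aff perm by blast
  have psi: "psi_vec n z' = wact n l (psi_vec n z)"
    using psi_affine_perm[of n id z' l z "- B * l", OF _ perm aff] assms(1) by simp
  have sum1: "(\<Sum>i<n. z' i) = 0"
  proof -
    have "(\<Sum>i<n. z' i) = l * (\<Sum>i<n. z i - B)" by (simp add: z'i sum_distrib_left)
    also have "(\<Sum>i<n. z i - B) = - (\<Sum>i<n. B - z i)" by (simp add: sum_negf[symmetric])
    also have "(\<Sum>i<n. B - z i) = 0" unfolding B_def using sum_c assms(1) by simp
    finally show ?thesis by simp
  qed
  have sum2: "(\<Sum>i<n. (cmod (z' i))\<^sup>2) = 1"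
  proof -
    have "(\<Sum>i<n. (cmod (z' i))\<^sup>2) = (\<Sum>i<n. (cmod (z i - B))\<^sup>2 / s)" by (simp add: nz)
    also have "\<dots> = s / s" unfolding s_def by (rule sum_divide_distrib[symmetric])
    finally show ?thesis using spos by simp
  qed
  have box: "z' \<in> Box n" unfolding Box_def
  proof (rule Pi_I)
    fix k
    show "z' k \<in> (if k < n then cball 0 1 else {0})"
    proof (cases "k < n")
      case True
      have "(cmod (z' k))\<^sup>2 \<le> (\<Sum>i<n. (cmod (z' i))\<^sup>2)" using True by (intro member_le_sum) auto
      then have "(cmod (z' k))\<^sup>2 \<le> 1\<^sup>2" using sum2 by simp
      then have "cmod (z' k) \<le> 1" by (rule power2_le_imp_le) simp
      then show ?thesis using True by simp
    next
      case False then show ?thesis unfolding z'_def by simp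
    qed
  qed
  have "z' \<in> Kset n" unfolding Kset_def using box sum1 sum2 by simp
  then show ?thesis using zc rel rpos psi unfolding l_def by blast
qed



lemma cls_rep:
  assumes "equiv A r" "C \<in> A // r" "x \<in> C"
  shows "x \<in> A" "C = r `` {x}"
proof -
  obtain z where z: "C = r `` {z}" "z \<in> A" using assms(2) by (auto elim: quotientE)
  then have zx: "(z, x) \<in> r" using assms(3) by simp
  then show "x \<in> A" using assms(1) unfolding equiv_def by auto
  show "C = r `` {x}" using equiv_class_eq[OF assms(1) zx] z by simp
qed

definition Dn :: "nat \<Rightarrow> (nat \<Rightarrow> complex) set" where
  "Dn n = (\<Inter>p\<in>({..<n} \<times> {..<n}) \<inter> {p. fst p \<noteq> snd p}. {z. z (fst p) \<noteq> z (snd p)})"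

lemma open_Dn: "open (Dn n)"
  unfolding Dn_def by (intro open_INT ballI open_Collect_neq cont_coord) auto

lemma Kset_conf: "z \<in> Kset n \<Longrightarrow> z \<in> conf n \<longleftrightarrow> z \<in> Dn n"
  unfolding conf_def Dn_def inj_on_def using Kset_vanish[of z n] by force

lemma conf_scale: "z \<in> conf n \<Longrightarrow> u \<noteq> 0 \<Longrightarrow> (\<lambda>i. u * z i) \<in> conf n"
  unfolding conf_def inj_on_def by auto

lemma Kset_scale: assumes "z \<in> Kset n" "cmod u = 1" shows "(\<lambda>i. u * z i) \<in> Kset n"
proof -
  have "(\<Sum>i<n. u * z i) = u * (\<Sum>i<n. z i)" by (simp add: sum_distrib_left)
  moreover have "(\<Sum>i<n. (cmod (u * z i))\<^sup>2) = (\<Sum>i<n. (cmod (z i))\<^sup>2)" using assms(2) by (simp add: norm_mult)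
  moreover have "(\<lambda>i. u * z i) \<in> Box n" unfolding Box_def
  proof (rule Pi_I)
    fix k
    have "z k \<in> (if k < n then cball 0 1 else {0})" using assms(1) unfolding Kset_def Box_def Pi_iff by blast
    then show "u * z k \<in> (if k < n then cball 0 1 else {0})" using assms(2) by (cases "k < n") (auto simp: norm_mult)
  qed
  ultimately show ?thesis using assms unfolding Kset_def by simp
qed

lemma wact_of_rel:
  assumes "(a, b) \<in> wp_rel n"
  shows "\<exists>t. t \<noteq> 0 \<and> b = wact n t a"
proof -
  obtain t where t: "t \<noteq> 0" "\<And>k. k < n - 1 \<Longrightarrow> b k = t ^ (n - k) * a k" "b \<in> wp_carrier n"
    using assms unfolding wp_rel_def by auto
  have "b = wact n t a" unfolding wact_def using t wp_vanish[OF t(3)] by (auto simp: fun_eq_iff)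
  then show ?thesis using t by blast
qed

lemma rel_of_wact:
  assumes "a \<in> wp_carrier n" "b \<in> wp_carrier n" "t \<noteq> 0" "b = wact n t a"
  shows "(a, b) \<in> wp_rel n"
  unfolding wp_rel_def using assms by (auto simp: wact_def)

theorem mainTheorem4:
  fixes n :: nat
  assumes "n \<ge> 2"
  shows "embedding_map (M_top n) (wp_top n) (psi_phi n)"
proof -
  have n0: "n > 0" using assms by simp
  have eqX: "equiv (topspace (top_of_set (conf n))) (M_rel n)" using equiv_M by simp
  have eqY: "equiv (topspace (top_of_set (wp_carrier n))) (wp_rel n)" using equiv_W by simp
  have topM: "topspace (M_top n) = conf n // M_rel n"
    unfolding M_top_def using qt_topspace[OF eqX] by simp
  have topW: "topspace (wp_top n) = wp_carrier n // wp_rel n"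
    unfolding wp_top_def using qt_topspace[OF eqY] by simp
  have openM: "openin (M_top n) U \<longleftrightarrow> U \<subseteq> conf n // M_rel n \<and> openin (top_of_set (conf n)) (\<Union>U)" for U
    unfolding M_top_def using qt_openin[OF eqX] by simp
  have openW: "openin (wp_top n) U \<longleftrightarrow> U \<subseteq> wp_carrier n // wp_rel n \<and> openin (top_of_set (wp_carrier n)) (\<Union>U)" for U
    unfolding wp_top_def using qt_openin[OF eqY] by simp
  have fcls: "psi_phi n (M_rel n `` {z}) = wp_rel n `` {psi_vec n z}" if "z \<in> conf n" for z
  proof -
    have "z \<in> M_rel n `` {z}" using equiv_class_self[OF equiv_M that] .
    then have "(SOME x. x \<in> M_rel n `` {z}) \<in> M_rel n `` {z}" by (rule someI[where P="\<lambda>x. x \<in> M_rel n `` {z}"])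
    then have "(z, SOME x. x \<in> M_rel n `` {z}) \<in> M_rel n" by simp
    then have "(psi_vec n z, psi_vec n (SOME x. x \<in> M_rel n `` {z})) \<in> wp_rel n" by (rule M_imp_W[OF assms])
    then have "wp_rel n `` {psi_vec n z} = wp_rel n `` {psi_vec n (SOME x. x \<in> M_rel n `` {z})}"
      by (rule equiv_class_eq[OF equiv_W])
    then show ?thesis unfolding psi_phi_def by simp
  qed
  have psiW: "psi_vec n z \<in> wp_carrier n" if "z \<in> conf n" for z using psi_in_wp_conf[OF assms that] .
  have selfW: "psi_vec n z \<in> wp_rel n `` {psi_vec n z}" if "z \<in> conf n" for z
    using equiv_class_self[OF equiv_W psiW[OF that]] .
  have fin: "psi_phi n C \<in> wp_carrier n // wp_rel n" if hC: "C \<in> conf n // M_rel n" for C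
  proof -
    obtain z where "C = M_rel n `` {z}" "z \<in> conf n" by (rule quotientE[OF hC]) auto
    then show ?thesis using fcls psiW by (simp add: quotientI)
  qed
  have memb: "wp_rel n `` {psi_vec n z} \<in> V \<longleftrightarrow> psi_vec n z \<in> \<Union>V"
    if "V \<subseteq> wp_carrier n // wp_rel n" "z \<in> conf n" for V z
  proof
    assume "wp_rel n `` {psi_vec n z} \<in> V" then show "psi_vec n z \<in> \<Union>V" using selfW[OF that(2)] by blast
  next
    assume "psi_vec n z \<in> \<Union>V"
    then obtain D where D: "D \<in> V" "psi_vec n z \<in> D" by auto
    then have "D = wp_rel n `` {psi_vec n z}" using cls_rep(2)[OF equiv_W] that(1) by blast
    then show "wp_rel n `` {psi_vec n z} \<in> V" using D by simp
  qed
  have cont: "continuous_map (M_top n) (wp_top n) (psi_phi n)"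
    unfolding continuous_map_def
  proof (intro conjI allI impI)
    show "psi_phi n \<in> topspace (M_top n) \<rightarrow> topspace (wp_top n)" using fin topM topW by auto
  next
    fix V assume "openin (wp_top n) V"
    then have V: "V \<subseteq> wp_carrier n // wp_rel n" "openin (top_of_set (wp_carrier n)) (\<Union>V)" using openW by auto
    have cpsi: "continuous_map (top_of_set (conf n)) (top_of_set (wp_carrier n)) (psi_vec n)"
      using cont_psi psiW by (auto simp: continuous_map_in_subtopology)
    have op: "openin (top_of_set (conf n)) {z \<in> conf n. psi_vec n z \<in> \<Union>V}"
      using openin_continuous_map_preimage[OF cpsi V(2)] by simp
    have un: "\<Union>{C \<in> topspace (M_top n). psi_phi n C \<in> V} = {z \<in> conf n. psi_vec n z \<in> \<Union>V}"
    proof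
      show "\<Union>{C \<in> topspace (M_top n). psi_phi n C \<in> V} \<subseteq> {z \<in> conf n. psi_vec n z \<in> \<Union>V}"
      proof
        fix x assume "x \<in> \<Union>{C \<in> topspace (M_top n). psi_phi n C \<in> V}"
        then obtain C where C: "C \<in> conf n // M_rel n" "psi_phi n C \<in> V" "x \<in> C" using topM by auto
        have x: "x \<in> conf n" "C = M_rel n `` {x}" using cls_rep[OF equiv_M C(1) C(3)] by auto
        then show "x \<in> {z \<in> conf n. psi_vec n z \<in> \<Union>V}" using C(2) fcls memb[OF V(1)] by auto
      qed
    next
      show "{z \<in> conf n. psi_vec n z \<in> \<Union>V} \<subseteq> \<Union>{C \<in> topspace (M_top n). psi_phi n C \<in> V}"
      proof
        fix z assume z: "z \<in> {z \<in> conf n. psi_vec n z \<in> \<Union>V}"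
        then have "M_rel n `` {z} \<in> {C \<in> topspace (M_top n). psi_phi n C \<in> V}"
          using fcls memb[OF V(1)] topM by (auto intro: quotientI)
        moreover have "z \<in> M_rel n `` {z}" using equiv_class_self[OF equiv_M] z by auto
        ultimately show "z \<in> \<Union>{C \<in> topspace (M_top n). psi_phi n C \<in> V}" by blast
      qed
    qed
    show "openin (M_top n) {C \<in> topspace (M_top n). psi_phi n C \<in> V}"
      unfolding openM un using op topM by auto
  qed
  have inj: "inj_on (psi_phi n) (topspace (M_top n))"
  proof (rule inj_onI)
    fix C1 C2 assume C: "C1 \<in> topspace (M_top n)" "C2 \<in> topspace (M_top n)" "psi_phi n C1 = psi_phi n C2"
    obtain z where z: "C1 = M_rel n `` {z}" "z \<in> conf n" using C(1) topM by (auto elim: quotientE)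
    obtain w where w: "C2 = M_rel n `` {w}" "w \<in> conf n" using C(2) topM by (auto elim: quotientE)
    have "wp_rel n `` {psi_vec n z} = wp_rel n `` {psi_vec n w}" using C(3) z w fcls by simp
    then have "(psi_vec n z, psi_vec n w) \<in> wp_rel n" using eq_equiv_class_iff[OF equiv_W psiW[OF z(2)] psiW[OF w(2)]] by simp
    then have "(z, w) \<in> M_rel n" using W_imp_M[OF assms _ w(2)] z(2) unfolding conf_def by auto
    then show "C1 = C2" using z w equiv_class_eq[OF equiv_M] by simp
  qed
  have openmap: "openin (subtopology (wp_top n) (psi_phi n ` topspace (M_top n))) (psi_phi n ` U)"
    if U: "openin (M_top n) U" for U
  proof -
    define Ob where "Ob = \<Union>U"
    have Usub: "U \<subseteq> conf n // M_rel n" and Oop: "openin (top_of_set (conf n)) Ob" using U openM Ob_def by auto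
    obtain G where G: "open G" "Ob = conf n \<inter> G" using Oop openin_open by metis
    have sat: "y \<in> Ob" if hx: "x \<in> Ob" and hr: "(x, y) \<in> M_rel n \<or> (y, x) \<in> M_rel n" for x y
    proof -
      obtain C where C: "C \<in> U" "x \<in> C" using hx Ob_def by auto
      have Cx: "C = M_rel n `` {x}" using cls_rep(2)[OF equiv_M _ C(2)] C(1) Usub by auto
      have "(x, y) \<in> M_rel n" using hr equiv_M unfolding equiv_def sym_def by blast
      then show ?thesis using Cx C Ob_def by auto
    qed
    have Osub: "Ob \<subseteq> conf n" using G by auto
    define Z where "Z = Kset n - Ob"
    have Zeq: "Z = Kset n \<inter> - (Dn n \<inter> G)" unfolding Z_def G(2) using Kset_conf by auto
    have cZ: "compact Z" unfolding Zeq using compact_Kset open_Dn G(1)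
      by (intro compact_Int_closed) auto
    have ZW: "psi_vec n z \<in> wp_carrier n" if "z \<in> Z" for z using Kset_psi[OF n0] that Z_def by auto
    have Zscale: "(\<lambda>i. u * z i) \<in> Z" if "z \<in> Z" "cmod u = 1" for z u
    proof -
      have u0: "u \<noteq> 0" using that(2) by auto
      have "(\<lambda>i. u * z i) \<notin> Ob"
      proof
        assume uz: "(\<lambda>i. u * z i) \<in> Ob"
        then have "(\<lambda>i. u * z i) \<in> conf n" using Osub by auto
        then have zc: "z \<in> conf n" using conf_scale[of "\<lambda>i. u * z i" n "1 / u"] u0 by simp
        have "\<forall>i<n. z i = (1 / u) * (\<lambda>i. u * z i) (id i) + 0" using u0 by simp
        then have "((\<lambda>i. u * z i), z) \<in> M_rel n" unfolding M_rel_def using zc conf_scale[OF zc u0] permutes_id u0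
          by (simp only: mem_Collect_eq case_prod_conv) (intro conjI exI[of _ id] exI[of _ "1 / u"] exI[of _ 0]; simp)
        then have "z \<in> Ob" using sat uz by blast
        then show False using that(1) Z_def by auto
      qed
      then show ?thesis using Kset_scale that Z_def by auto
    qed
    define A1 where "A1 = Nrm n ` psi_vec n ` Z"
    have cA1: "compact A1" unfolding A1_def image_image
      using ZW by (intro compact_continuous_image cZ continuous_on_compose2[OF cont_Nrm cont_psi]) auto
    then have clA1: "closed A1" by (rule compact_imp_closed)
    define W where "W = {b \<in> wp_carrier n. Nrm n b \<notin> A1}"
    have Wop: "openin (top_of_set (wp_carrier n)) W"
    proof -
      have "continuous_map (top_of_set (wp_carrier n)) euclidean (Nrm n)" using cont_Nrm by simp
      from openin_continuous_map_preimage[OF this, of "- A1"] clA1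
      show ?thesis unfolding W_def by (simp add: closed_def)
    qed
    have Wsat: "b' \<in> W" if hb: "b \<in> W" and hbb: "(b, b') \<in> wp_rel n" for b b'
    proof (rule ccontr)
      assume nb': "b' \<notin> W"
      obtain t where t: "t \<noteq> 0" "b' = wact n t b" using wact_of_rel[OF hbb] by auto
      have bW: "b \<in> wp_carrier n" and b'W: "b' \<in> wp_carrier n" using that unfolding W_def wp_rel_def by auto
      then have "Nrm n b' \<in> A1" using nb' W_def by auto
      then obtain z where z: "z \<in> Z" "Nrm n b' = Nrm n (psi_vec n z)" unfolding A1_def by auto
      define v where "v = complex_of_real (cmod t) / t"
      have v1: "cmod v = 1" unfolding v_def using t(1) by (simp add: norm_divide)
      have v0: "v \<noteq> 0" using v1 by auto
      have "Nrm n b' = wact n (t / cmod t) (Nrm n b)" using Nrm_wact[OF bW t(1)] t(2) by simp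
      then have "wact n v (Nrm n b') = wact n (v * (t / cmod t)) (Nrm n b)" by (simp add: wact_wact)
      also have "v * (t / cmod t) = 1" unfolding v_def using t(1) by simp
      also have "wact n 1 (Nrm n b) = Nrm n b" by (rule wact_1) (simp add: Nrm_def wact_def)
      finally have "Nrm n b = wact n v (Nrm n (psi_vec n z))" using z(2) by simp
      also have "\<dots> = Nrm n (wact n v (psi_vec n z))" using Nrm_wact[OF ZW[OF z(1)] v0] v1 by simp
      also have "\<dots> = Nrm n (psi_vec n (\<lambda>i. v * z i))" using psi_scale[OF n0] by simp
      finally have "Nrm n b \<in> A1" unfolding A1_def using Zscale[OF z(1) v1] by auto
      then show False using that(1) W_def by auto
    qed
    have key: "psi_vec n z \<in> W \<longleftrightarrow> z \<in> Ob" if zc: "z \<in> conf n" for z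
    proof
      assume pW: "psi_vec n z \<in> W"
      show "z \<in> Ob"
      proof (rule ccontr)
        assume zO: "z \<notin> Ob"
        obtain z' r where z': "z' \<in> Kset n" "z' \<in> conf n" "(z, z') \<in> M_rel n" "r > 0"
          "psi_vec n z' = wact n (complex_of_real (1 / r)) (psi_vec n z)"
          using normalize_conf[OF assms zc] by blast
        have "z' \<notin> Ob" using sat zO z'(3) by blast
        then have z'Z: "z' \<in> Z" using z'(1) Z_def by auto
        have "Nrm n (psi_vec n z') = wact n (complex_of_real (1 / r) / complex_of_real (cmod (complex_of_real (1 / r)))) (Nrm n (psi_vec n z))"
          unfolding z'(5) using Nrm_wact[OF psiW[OF zc], of "complex_of_real (1 / r)"] z'(4) by simp
        also have "complex_of_real (1 / r) / complex_of_real (cmod (complex_of_real (1 / r))) = 1"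
        proof -
          have "cmod (complex_of_real (1 / r)) = 1 / r" using z'(4) by (simp only: norm_of_real) simp
          then show ?thesis using z'(4) by simp
        qed
        also have "wact n 1 (Nrm n (psi_vec n z)) = Nrm n (psi_vec n z)" by (rule wact_1) (simp add: Nrm_def wact_def)
        finally have "Nrm n (psi_vec n z) \<in> A1" unfolding A1_def using z'Z by (metis image_eqI)
        then show False using pW W_def by auto
      qed
    next
      assume zO: "z \<in> Ob"
      show "psi_vec n z \<in> W"
      proof (rule ccontr)
        assume "psi_vec n z \<notin> W"
        then have "Nrm n (psi_vec n z) \<in> A1" using psiW[OF zc] W_def by auto
        then obtain z' where z': "z' \<in> Z" "Nrm n (psi_vec n z) = Nrm n (psi_vec n z')" unfolding A1_def by auto
        define t where "t = complex_of_real (nu n (psi_vec n z)) * complex_of_real (1 / nu n (psi_vec n z'))"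
        have t0: "t \<noteq> 0" unfolding t_def using nu_pos[OF psiW[OF zc]] nu_pos[OF ZW[OF z'(1)]] by simp
        have "psi_vec n z = wact n (complex_of_real (nu n (psi_vec n z))) (Nrm n (psi_vec n z))"
          using Nrm_inv[OF psiW[OF zc]] by simp
        also have "\<dots> = wact n (complex_of_real (nu n (psi_vec n z))) (Nrm n (psi_vec n z'))" using z'(2) by simp
        also have "\<dots> = wact n t (psi_vec n z')" unfolding Nrm_def wact_wact t_def by simp
        finally have "(psi_vec n z', psi_vec n z) \<in> wp_rel n"
          using rel_of_wact[OF ZW[OF z'(1)] psiW[OF zc] t0] by simp
        then have "(z', z) \<in> M_rel n" using W_imp_M[OF assms _ zc] z'(1) Kset_vanish Z_def by auto
        then have "z' \<in> Ob" using sat zO by blast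
        then show False using z'(1) Z_def by auto
      qed
    qed
    define T where "T = {D \<in> wp_carrier n // wp_rel n. D \<subseteq> W}"
    have UT: "\<Union>T = W"
    proof
      show "\<Union>T \<subseteq> W" unfolding T_def by auto
      show "W \<subseteq> \<Union>T"
      proof
        fix b assume b: "b \<in> W"
        then have bc: "b \<in> wp_carrier n" unfolding W_def by auto
        have "wp_rel n `` {b} \<in> T" unfolding T_def using Wsat b bc by (auto intro: quotientI)
        moreover have "b \<in> wp_rel n `` {b}" using equiv_class_self[OF equiv_W bc] .
        ultimately show "b \<in> \<Union>T" by blast
      qed
    qed
    have Top: "openin (wp_top n) T" unfolding openW UT using Wop T_def by auto
    have "psi_phi n ` U = T \<inter> psi_phi n ` topspace (M_top n)"
    proof
      show "psi_phi n ` U \<subseteq> T \<inter> psi_phi n ` topspace (M_top n)"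
      proof
        fix D assume "D \<in> psi_phi n ` U"
        then obtain C where C: "C \<in> U" "D = psi_phi n C" by auto
        obtain z where z: "C = M_rel n `` {z}" "z \<in> conf n" using C(1) Usub by (auto elim: quotientE)
        have "z \<in> Ob" using C(1) z Ob_def equiv_class_self[OF equiv_M z(2)] by auto
        then have pz: "psi_vec n z \<in> W" using key[OF z(2)] by simp
        have "D = wp_rel n `` {psi_vec n z}" using C z fcls by simp
        then have "D \<in> T" unfolding T_def using pz Wsat psiW[OF z(2)] by (auto intro: quotientI)
        then show "D \<in> T \<inter> psi_phi n ` topspace (M_top n)" using C Usub topM by auto
      qed
    next
      show "T \<inter> psi_phi n ` topspace (M_top n) \<subseteq> psi_phi n ` U"
      proof
        fix D assume D: "D \<in> T \<inter> psi_phi n ` topspace (M_top n)"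
        then obtain C where C: "C \<in> conf n // M_rel n" "D = psi_phi n C" using topM by auto
        obtain z where z: "C = M_rel n `` {z}" "z \<in> conf n" using C(1) by (auto elim: quotientE)
        have "D = wp_rel n `` {psi_vec n z}" using C z fcls by simp
        then have "psi_vec n z \<in> W" using D selfW[OF z(2)] unfolding T_def by auto
        then have "z \<in> Ob" using key[OF z(2)] by simp
        then obtain C' where C': "C' \<in> U" "z \<in> C'" using Ob_def by auto
        have "C' = C" using cls_rep(2)[OF equiv_M _ C'(2)] C'(1) Usub z(1) by auto
        then show "D \<in> psi_phi n ` U" using C C' by auto
      qed
    qed
    then show ?thesis unfolding openin_subtopology using Top by blast
  qed
  have sub: "continuous_map (M_top n) (subtopology (wp_top n) (psi_phi n ` topspace (M_top n))) (psi_phi n)"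
    using cont by (auto simp: continuous_map_in_subtopology)
  have top2: "psi_phi n ` topspace (M_top n) = topspace (subtopology (wp_top n) (psi_phi n ` topspace (M_top n)))"
    using cont by (auto simp: continuous_map_def)
  show ?thesis unfolding embedding_map_def
    by (rule bijective_open_imp_homeomorphic_map[OF sub _ top2 inj]) (use openmap in \<open>auto simp: open_map_def\<close>)
qed

end
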